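(* For every integer $r\ge 1$, every line passing through two distinct points of $P_r$ has slope at most the slope of $\ell_r$; that is, among the lines passing through two points of $P_r$, $\ell_r$ is the line with the largest slope.
   Context: Define finite sets $P_r\subset\mathbb{Z}^2$ for integers $r\ge 0$ recursively: $P_0:=\{(0,0)\}$; for $r\ge 1$, $L_r:=P_{r-1}$, $R_r:=\{(x+\delta_r,\,y+\delta_r'):(x,y)\in L_r\}$ and $P_r:=L_r\cup R_r$, where $\delta_r:=3\cdot 4^{r-1}$ and $\delta_r':=(3r+1)\cdot 4^{r-1}$. For $r\ge 1$, let $p_r$ be the rightmost point (largest $x$-coordinate) of $L_r$, let $q_r$ be the leftmost point (smallest $x$-coordinate) of $R_r$, and let $\ell_r$ be the straight line through $p_r$ and $q_r$. *)

theory Defs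
  imports Complex_Main
begin

definition delta :: "nat \<Rightarrow> int" where
  "delta r = 3 * 4 ^ (r - 1)"

definition delta' :: "nat \<Rightarrow> int" where
  "delta' r = (3 * int r + 1) * 4 ^ (r - 1)"

fun P :: "nat \<Rightarrow> (int \<times> int) set" where
  "P 0 = {(0, 0)}"
| "P (Suc n) = P n \<union> (\<lambda>(x, y). (x + delta (Suc n), y + delta' (Suc n))) ` P n"

definition L :: "nat \<Rightarrow> (int \<times> int) set" where
  "L r = P (r - 1)"

definition R :: "nat \<Rightarrow> (int \<times> int) set" where
  "R r = (\<lambda>(x, y). (x + delta r, y + delta' r)) ` L r"

definition pt :: "nat \<Rightarrow> int \<times> int" where
  "pt r = (SOME p. p \<in> L r \<and> (\<forall>q\<in>L r. fst q \<le> fst p))"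

definition qt :: "nat \<Rightarrow> int \<times> int" where
  "qt r = (SOME q. q \<in> R r \<and> (\<forall>p\<in>R r. fst q \<le> fst p))"

definition slope :: "int \<times> int \<Rightarrow> int \<times> int \<Rightarrow> real" where
  "slope a b = real_of_int (snd b - snd a) / real_of_int (fst b - fst a)"

end

theory Submission
  imports Defs
begin

definition G :: "int \<Rightarrow> int \<Rightarrow> int \<times> int \<Rightarrow> int" where
  "G N D p = N * fst p - D * snd p"

definition w :: "nat \<Rightarrow> int \<times> int" where
  "w n = (4 ^ n - 1, int n * 4 ^ n)"

definition v :: "nat \<Rightarrow> int \<times> int" where
  "v k = (delta k, delta' k)"

lemma shift_eq: "(\<lambda>(x, y). (x + delta k, y + delta' k)) a = (fst a + delta k, snd a + delta' k)"
  by (cases a) auto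

lemma orig_in: "(0,0) \<in> P n"
  by (induction n) auto

lemma w_in: "w n \<in> P n"
proof (induction n)
  case 0 then show ?case by (simp add: w_def)
next
  case (Suc n)
  have "w (Suc n) = (fst (w n) + delta (Suc n), snd (w n) + delta' (Suc n))"
    by (simp add: w_def delta_def delta'_def algebra_simps)
  then have "w (Suc n) = (\<lambda>(x, y). (x + delta (Suc n), y + delta' (Suc n))) (w n)"
    by (simp add: shift_eq)
  then show ?case using Suc by simp
qed

lemma Gadd: "G N D (fst a + x, snd a + y) = G N D a + G N D (x, y)"
  by (simp add: G_def algebra_simps)

lemma main_ind:
  assumes "\<forall>k. 1 \<le> k \<and> k \<le> n \<longrightarrow> G N D (w (k - 1)) \<le> G N D (v k)"
  shows "(\<forall>a\<in>P n. 0 \<le> fst a \<and> fst a \<le> 4 ^ n - 1 \<and> 0 \<le> G N D a \<and> G N D a \<le> G N D (w n))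
       \<and> (\<forall>a\<in>P n. \<forall>b\<in>P n. (fst a < fst b \<longrightarrow> G N D a \<le> G N D b) \<and> (a \<noteq> b \<longrightarrow> fst a \<noteq> fst b))"
  using assms
proof (induction n)
  case 0 then show ?case by (simp add: w_def G_def)
next
  case (Suc n)
  have IH: "(\<forall>a\<in>P n. 0 \<le> fst a \<and> fst a \<le> 4 ^ n - 1 \<and> 0 \<le> G N D a \<and> G N D a \<le> G N D (w n))
       \<and> (\<forall>a\<in>P n. \<forall>b\<in>P n. (fst a < fst b \<longrightarrow> G N D a \<le> G N D b) \<and> (a \<noteq> b \<longrightarrow> fst a \<noteq> fst b))"
    using Suc by auto
  have c: "G N D (w n) \<le> G N D (v (Suc n))" using Suc.prems by auto
  have "G N D (0,0) \<le> G N D (w n)" using IH orig_in[of n] by blast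
  then have w0: "0 \<le> G N D (w n)" by (simp add: G_def)
  have p4S: "(4::int) ^ Suc n = 4 * 4 ^ n" by simp
  have dv: "delta (Suc n) = 3 * 4 ^ n" by (simp add: delta_def)
  have wS: "G N D (w (Suc n)) = G N D (w n) + G N D (v (Suc n))"
    by (simp add: G_def w_def v_def delta_def delta'_def algebra_simps)
  define sh where "sh = (\<lambda>a::int\<times>int. (fst a + delta (Suc n), snd a + delta' (Suc n)))"
  have PS: "P (Suc n) = P n \<union> sh ` P n"
    by (auto simp: sh_def shift_eq)
  have Gsh: "G N D (sh a) = G N D a + G N D (v (Suc n))" for a
    by (simp add: sh_def Gadd v_def)
  have p4: "(0::int) \<le> 4 ^ n" by simp
  have A: "\<forall>a\<in>P (Suc n). 0 \<le> fst a \<and> fst a \<le> 4 ^ Suc n - 1 \<and> 0 \<le> G N D a \<and> G N D a \<le> G N D (w (Suc n))"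
  proof
    fix a assume "a \<in> P (Suc n)"
    then have "a \<in> P n \<union> sh ` P n" by (simp only: PS)
    then consider "a \<in> P n" | b where "b \<in> P n" "a = sh b" by blast
    then show "0 \<le> fst a \<and> fst a \<le> 4 ^ Suc n - 1 \<and> 0 \<le> G N D a \<and> G N D a \<le> G N D (w (Suc n))"
    proof cases
      case 1
      then have "0 \<le> fst a \<and> fst a \<le> 4 ^ n - 1 \<and> 0 \<le> G N D a \<and> G N D a \<le> G N D (w n)"
        using IH by blast
      then show ?thesis using c w0 wS p4 p4S by linarith
    next
      case 2
      then have "0 \<le> fst b \<and> fst b \<le> 4 ^ n - 1 \<and> 0 \<le> G N D b \<and> G N D b \<le> G N D (w n)"
        using IH by blast
      moreover have "fst a = fst b + 3 * 4 ^ n" using 2 by (simp add: sh_def dv)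
      moreover have "G N D a = G N D b + G N D (v (Suc n))" using 2 Gsh by simp
      ultimately show ?thesis using c w0 wS p4 p4S by linarith
    qed
  qed
  have B: "\<forall>a\<in>P (Suc n). \<forall>b\<in>P (Suc n). (fst a < fst b \<longrightarrow> G N D a \<le> G N D b) \<and> (a \<noteq> b \<longrightarrow> fst a \<noteq> fst b)"
  proof (intro ballI)
    fix a b assume a: "a \<in> P (Suc n)" and b: "b \<in> P (Suc n)"
    have sh_inj: "sh x = sh y \<longleftrightarrow> x = y" for x y
      by (cases x; cases y) (auto simp: sh_def)
    have fsh: "fst (sh x) = fst x + 3 * 4 ^ n" for x by (simp add: sh_def dv)
    consider "a \<in> P n" "b \<in> P n" | a' where "a' \<in> P n" "a = sh a'" "b \<in> P n"
      | b' where "a \<in> P n" "b' \<in> P n" "b = sh b'"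
      | a' b' where "a' \<in> P n" "a = sh a'" "b' \<in> P n" "b = sh b'"
      using a b unfolding PS by blast
    then show "(fst a < fst b \<longrightarrow> G N D a \<le> G N D b) \<and> (a \<noteq> b \<longrightarrow> fst a \<noteq> fst b)"
    proof cases
      case 1 then show ?thesis using IH by blast
    next
      case 2
      have "fst b \<le> 4 ^ n - 1" "0 \<le> fst a'" using IH 2 by blast+
      moreover have "fst a = fst a' + 3 * 4 ^ n" using 2 fsh by simp
      ultimately have "fst b < fst a" using p4 by linarith
      then show ?thesis by auto
    next
      case 3
      have "fst a \<le> 4 ^ n - 1" "0 \<le> fst b'" "G N D a \<le> G N D (w n)" "0 \<le> G N D b'"
        using IH 3 by blast+
      moreover have "fst b = fst b' + 3 * 4 ^ n" "G N D b = G N D b' + G N D (v (Suc n))" using 3 fsh Gsh by simp_all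
      ultimately have "fst a < fst b" "G N D a \<le> G N D b" using c p4 by linarith+
      then show ?thesis by auto
    next
      case 4
      have "(fst a' < fst b' \<longrightarrow> G N D a' \<le> G N D b') \<and> (a' \<noteq> b' \<longrightarrow> fst a' \<noteq> fst b')"
        using IH 4 by blast
      then show ?thesis using 4 fsh Gsh sh_inj by auto
    qed
  qed
  show ?case using A B by blast
qed


lemma inj_bounds:
  "(\<forall>a\<in>P n. 0 \<le> fst a \<and> fst a \<le> 4 ^ n - 1) \<and> (\<forall>a\<in>P n. \<forall>b\<in>P n. a \<noteq> b \<longrightarrow> fst a \<noteq> fst b)"
  using main_ind[of n 0 0] by (simp add: G_def)

lemma pt_eq: "pt (Suc m) = w m"
proof -
  have L: "L (Suc m) = P m" by (simp add: L_def)
  have ex: "w m \<in> L (Suc m) \<and> (\<forall>q\<in>L (Suc m). fst q \<le> fst (w m))"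
    using w_in[of m] inj_bounds[of m] by (auto simp: L w_def)
  have "pt (Suc m) \<in> L (Suc m) \<and> (\<forall>q\<in>L (Suc m). fst q \<le> fst (pt (Suc m)))"
    unfolding pt_def by (rule someI, rule ex)
  then have "pt (Suc m) \<in> P m" "fst (w m) \<le> fst (pt (Suc m))" using ex L by auto
  moreover have "fst (pt (Suc m)) \<le> fst (w m)" using ex \<open>pt (Suc m) \<in> P m\<close> L by auto
  ultimately show ?thesis using inj_bounds[of m] w_in[of m] by force
qed

lemma qt_eq: "qt (Suc m) = v (Suc m)"
proof -
  have R: "R (Suc m) = (\<lambda>a. (fst a + delta (Suc m), snd a + delta' (Suc m))) ` P m"
    by (auto simp: R_def L_def shift_eq)
  have ex: "v (Suc m) \<in> R (Suc m) \<and> (\<forall>p\<in>R (Suc m). fst (v (Suc m)) \<le> fst p)"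
  proof
    show "v (Suc m) \<in> R (Suc m)" unfolding R using orig_in[of m]
      by (auto simp: v_def image_iff intro!: bexI[of _ "(0,0)"])
    show "\<forall>p\<in>R (Suc m). fst (v (Suc m)) \<le> fst p" unfolding R using inj_bounds[of m]
      by (auto simp: v_def)
  qed
  have "qt (Suc m) \<in> R (Suc m) \<and> (\<forall>p\<in>R (Suc m). fst (qt (Suc m)) \<le> fst p)"
    unfolding qt_def by (rule someI, rule ex)
  then obtain a where a: "a \<in> P m" "qt (Suc m) = (fst a + delta (Suc m), snd a + delta' (Suc m))"
    "fst (qt (Suc m)) \<le> fst (v (Suc m))"
    using ex unfolding R by auto
  then have "fst a \<le> 0" by (simp add: v_def)
  moreover have "0 \<le> fst a" using a inj_bounds[of m] by blast
  ultimately have "fst a = fst (0::int,0::int)" by simp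
  then have "a = (0,0)" using inj_bounds[of m] orig_in[of m] a(1) by blast
  then show ?thesis using a by (simp add: v_def)
qed

lemma cond_ineq:
  fixes A B :: int and j m :: nat
  assumes "j \<le> m" "0 < A" "A \<le> B"
  shows "0 \<le> 4*A*B*(int m - int j) + (2*int m+4)*B - (2*int j+4)*A"
proof -
  have "0 \<le> A*B*(int m - int j)" using assms by simp
  moreover have "(2*int j+4)*A \<le> (2*int m+4)*B"
    using assms by (intro mult_mono) auto
  ultimately show ?thesis by linarith
qed

theorem lemma1:
  fixes r :: nat
  assumes "r \<ge> 1"
  shows "\<forall>a\<in>P r. \<forall>b\<in>P r. a \<noteq> b \<longrightarrow>
           fst a \<noteq> fst b \<and> slope a b \<le> slope (pt r) (qt r)"
proof -
  obtain m where r: "r = Suc m" using assms by (cases r) auto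
  define N where "N = snd (v r) - snd (w m)"
  define D where "D = fst (v r) - fst (w m)"
  have Deq: "D = 2 * 4 ^ m + 1" by (simp add: D_def v_def w_def delta_def r)
  have Neq: "N = (2 * int m + 4) * 4 ^ m" by (simp add: N_def v_def w_def delta'_def r algebra_simps)
  have sl: "slope (pt r) (qt r) = real_of_int N / real_of_int D"
    by (simp add: slope_def r pt_eq qt_eq N_def D_def)
  have Dpos: "0 < D" using Deq by simp
  have hyp: "\<forall>k. 1 \<le> k \<and> k \<le> r \<longrightarrow> G N D (w (k - 1)) \<le> G N D (v k)"
  proof (intro allI impI)
    fix k assume k: "1 \<le> k \<and> k \<le> r"
    then obtain j where j: "k = Suc j" "j \<le> m" using r by (cases k) auto
    have A: "(0::int) < 4 ^ j" "(4::int) ^ j \<le> 4 ^ m" using j by (auto intro: power_increasing)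
    have eq: "G N D (v k) - G N D (w (k - 1)) = 4*4^j*4^m*(int m - int j) + (2*int m+4)*4^m - (2*int j+4)*4^j"
      by (simp add: G_def v_def w_def delta_def delta'_def Neq Deq j algebra_simps)
    show "G N D (w (k - 1)) \<le> G N D (v k)" using cond_ineq[OF j(2) A] eq by linarith
  qed
  note M = main_ind[OF hyp]
  have key: "slope a b \<le> real_of_int N / real_of_int D"
    if ab: "a \<in> P r" "b \<in> P r" "fst a < fst b" for a b
  proof -
    have "G N D a \<le> G N D b" using M ab by blast
    then have i: "D * (snd b - snd a) \<le> N * (fst b - fst a)" by (simp add: G_def algebra_simps)
    have "real_of_int (snd b - snd a) / real_of_int (fst b - fst a) \<le> real_of_int N / real_of_int D"
    proof -
      have "real_of_int D * real_of_int (snd b - snd a) \<le> real_of_int N * real_of_int (fst b - fst a)"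
        using i by (metis of_int_le_iff of_int_mult)
      then show ?thesis using Dpos ab(3) by (simp add: divide_simps mult.commute)
    qed
    then show ?thesis by (simp add: slope_def)
  qed
  have symm: "slope a b = slope b a" for a b
  proof -
    have "\<And>p q s t :: real. (q - p) / (s - t) = (p - q) / (t - s)"
      by (metis minus_diff_eq minus_divide_divide)
    then show ?thesis unfolding slope_def of_int_diff by blast
  qed
  show ?thesis
  proof (intro ballI impI)
    fix a b assume ab: "a \<in> P r" "b \<in> P r" "a \<noteq> b"
    then have ne: "fst a \<noteq> fst b" using M by blast
    have "slope a b \<le> slope (pt r) (qt r)"
    proof (cases "fst a < fst b")
      case True then show ?thesis using key ab sl by simp
    next
      case False then have "fst b < fst a" using ne by simp
      then show ?thesis using key[of b a] ab sl symm[of a b] by simp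
    qed
    then show "fst a \<noteq> fst b \<and> slope a b \<le> slope (pt r) (qt r)" using ne by simp
  qed
qed

end
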